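(* Assume $\sum_{i=1}^M b_i<1$ and let $\mathbf r^\star=\mathbf r^\star(\epsilon)$ be the energy-scarce solution defined in the context. Then, with $M$, $(w_i)$, $(b_i)$ fixed, as $\epsilon\to0^+$, $$\big|\bar\Delta(\mathbf r^\star)-\bar\Delta_{\mathrm{opt}}(\epsilon)\big|\le \epsilon\, C_2+o(\epsilon),\qquad C_2=\sum_{l=1}^M\frac{w_l}{b_l\big(1-\sum_{i=1}^M b_i\big)}\Big(3\sum_{i=1}^M b_i-\min_j b_j\Big).$$
   Context: Fix an integer $M\ge1$, weights $w_1,\dots,w_M>0$, constants $b_1,\dots,b_M>0$, and $\epsilon>0$. For $\mathbf r\in(0,\infty)^M$ write $S(\mathbf r)=\sum_{i=1}^M r_i$ and define $$\bar\Delta(\mathbf r)=\sum_{l=1}^M \frac{w_l e^{-r_l\epsilon}}{r_l}\, e^{\epsilon S(\mathbf r)}\big(1+S(\mathbf r)\big)+\sum_{l=1}^M w_l,\qquad \sigma_l(\mathbf r)=\frac{(1-e^{-r_l\epsilon})S(\mathbf r)+r_le^{-r_l\epsilon}}{S(\mathbf r)+1}.$$ Problem 1: minimize $\bar\Delta(\mathbf r)$ over $\mathbf r\in(0,\infty)^M$ subject to $\sigma_l(\mathbf r)\le b_l$ for all $l$; its optimal (infimum) value is $\bar\Delta_{\mathrm{opt}}(\epsilon)$. Energy-scarce solution (when $B:=\sum_i b_i<1$): for each $l$ let $$c_l=\frac{2b_l(1-B)^2}{b_l(1-B)^2+\sqrt{b_l^2(1-B)^4+4b_l^2(1-B)^2(B-b_l)\epsilon}},$$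 let $x^\star=\frac{\min_l c_l}{1-B}$, $\beta^\star=\sum_{i=1}^M \frac{1}{\sqrt{w_i}}$, and set $r^\star_l=\min\{b_l,\beta^\star\sqrt{w_l}\}\,x^\star$ (which equals $b_l x^\star$). *)

theory Defs
  imports "HOL-Analysis.Analysis" "HOL-Library.Landau_Symbols"
begin

text \<open>Indices range over {1..M}; vectors r are functions nat => real, only their
values on {1..M} matter.\<close>

definition Ssum :: "nat \<Rightarrow> (nat \<Rightarrow> real) \<Rightarrow> real" where
  "Ssum M r = (\<Sum>i=1..M. r i)"

definition Delta_bar :: "nat \<Rightarrow> (nat \<Rightarrow> real) \<Rightarrow> real \<Rightarrow> (nat \<Rightarrow> real) \<Rightarrow> real" where
  "Delta_bar M w \<epsilon> r =
     (\<Sum>l=1..M. w l * exp (- r l * \<epsilon>) / r l * exp (\<epsilon> * Ssum M r) * (1 + Ssum M r))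
     + (\<Sum>l=1..M. w l)"

definition sigma :: "nat \<Rightarrow> real \<Rightarrow> (nat \<Rightarrow> real) \<Rightarrow> nat \<Rightarrow> real" where
  "sigma M \<epsilon> r l =
     ((1 - exp (- r l * \<epsilon>)) * Ssum M r + r l * exp (- r l * \<epsilon>)) / (Ssum M r + 1)"

definition feasible :: "nat \<Rightarrow> (nat \<Rightarrow> real) \<Rightarrow> real \<Rightarrow> (nat \<Rightarrow> real) \<Rightarrow> bool" where
  "feasible M b \<epsilon> r \<longleftrightarrow> (\<forall>l\<in>{1..M}. 0 < r l \<and> sigma M \<epsilon> r l \<le> b l)"

definition Delta_opt :: "nat \<Rightarrow> (nat \<Rightarrow> real) \<Rightarrow> (nat \<Rightarrow> real) \<Rightarrow> real \<Rightarrow> real" where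
  "Delta_opt M w b \<epsilon> = (INF r \<in> {r. feasible M b \<epsilon> r}. Delta_bar M w \<epsilon> r)"

definition c_coef :: "nat \<Rightarrow> (nat \<Rightarrow> real) \<Rightarrow> real \<Rightarrow> nat \<Rightarrow> real" where
  "c_coef M b \<epsilon> l = (let B = (\<Sum>i=1..M. b i) in
     2 * b l * (1 - B)^2 /
     (b l * (1 - B)^2 + sqrt ((b l)^2 * (1 - B)^4 + 4 * (b l)^2 * (1 - B)^2 * (B - b l) * \<epsilon>)))"

definition x_star :: "nat \<Rightarrow> (nat \<Rightarrow> real) \<Rightarrow> real \<Rightarrow> real" where
  "x_star M b \<epsilon> = Min (c_coef M b \<epsilon> ` {1..M}) / (1 - (\<Sum>i=1..M. b i))"

definition beta_star :: "nat \<Rightarrow> (nat \<Rightarrow> real) \<Rightarrow> real" where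
  "beta_star M w = (\<Sum>i=1..M. 1 / sqrt (w i))"

definition r_star :: "nat \<Rightarrow> (nat \<Rightarrow> real) \<Rightarrow> (nat \<Rightarrow> real) \<Rightarrow> real \<Rightarrow> nat \<Rightarrow> real" where
  "r_star M w b \<epsilon> l = min (b l) (beta_star M w * sqrt (w l)) * x_star M b \<epsilon>"

definition C2 :: "nat \<Rightarrow> (nat \<Rightarrow> real) \<Rightarrow> (nat \<Rightarrow> real) \<Rightarrow> real" where
  "C2 M w b = (\<Sum>l=1..M. w l / (b l * (1 - (\<Sum>i=1..M. b i)))
                 * (3 * (\<Sum>i=1..M. b i) - Min (b ` {1..M})))"

end

theory Submission
  imports Defs
begin

lemma exp_cubic:
  fixes u :: real assumes "0 \<le> u" "u \<le> 1"
  shows "exp u * (1 + u) \<le> 1 + 2*u + 3*u^2"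
proof -
  have "exp u \<le> 1 + u + u^2" using exp_bound[OF assms] .
  then have "exp u * (1 + u) \<le> (1 + u + u^2) * (1 + u)"
    by (rule mult_right_mono) (use assms in auto)
  also have "\<dots> \<le> 1 + 2*u + 3*u^2"
  proof -
    have "u*u*u \<le> u*u" using mult_left_mono[of u 1 "u*u"] assms by simp
    then show ?thesis by (simp add: algebra_simps power2_eq_square)
  qed
  finally show ?thesis .
qed

lemma sqrt_bound:
  fixes a t :: real assumes "a > 0" "t \<ge> 0"
  shows "sqrt (a^2 + t) \<le> a + t/(2*a)"
proof (rule real_le_lsqrt)
  show "0 \<le> a + t/(2*a)" using assms by simp
  have "(a + t/(2*a))^2 = a^2 + t + (t/(2*a))^2"
    using assms by (simp add: power2_eq_square field_simps)
  then show "a^2 + t \<le> (a + t/(2*a))^2" by simp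
qed

lemma eps_bound:
  fixes M :: nat and w b :: "nat \<Rightarrow> real" and \<epsilon> :: real
  assumes M1: "M \<ge> 1"
    and wpos: "\<forall>i\<in>{1..M}. w i > 0"
    and bpos: "\<forall>i\<in>{1..M}. b i > 0"
    and Bl1: "(\<Sum>i=1..M. b i) < 1"
    and eps: "0 < \<epsilon>"
    and epsk: "\<epsilon> < ((\<Sum>i=1..M. b i) + Min (b ` {1..M})) / (1 - (\<Sum>i=1..M. b i))
        / (3 * (((\<Sum>i=1..M. b i) - Min (b ` {1..M})) / (1 - (\<Sum>i=1..M. b i)))^2 + 1)"
    and eps1: "\<epsilon> < 1 / (((\<Sum>i=1..M. b i) - Min (b ` {1..M})) / (1 - (\<Sum>i=1..M. b i)) + 1)"
  shows "\<bar>Delta_bar M w \<epsilon> (r_star M w b \<epsilon>) - Delta_opt M w b \<epsilon>\<bar> \<le> \<epsilon> * C2 M w b"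
proof -
  define B where "B = (\<Sum>i=1..M. b i)"
  define a where "a = 1 - B"
  define bmin where "bmin = Min (b ` {1..M})"
  define L where "L = (\<Sum>l=1..M. w l / b l) + (\<Sum>l=1..M. w l)"
  define k where "k = (B + bmin)/a"
  define ca where "ca = (B - bmin)/a"
  have fin: "finite {1..M}" by simp
  have ne: "{1..M} \<noteq> {}" using M1 by simp
  have a_pos: "a > 0" using Bl1 by (simp add: a_def B_def)
  have bmin_in: "bmin \<in> b ` {1..M}" unfolding bmin_def using fin ne by (intro Min_in) auto
  have bmin_pos: "bmin > 0" using bmin_in bpos by auto
  have bmin_le: "\<forall>l\<in>{1..M}. bmin \<le> b l" unfolding bmin_def using fin by auto
  have bl_le_B: "\<forall>l\<in>{1..M}. b l \<le> B" unfolding B_def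
    using bpos by (auto intro!: member_le_sum)
  have bmin_le_B: "bmin \<le> B" using bmin_in bl_le_B by auto
  have k_pos: "k > 0" using a_pos bmin_pos bmin_le_B by (simp add: k_def)
  have ca_nn: "ca \<ge> 0" using a_pos bmin_le_B by (simp add: ca_def)
  have epsk': "\<epsilon> < k / (3*ca^2 + 1)" using epsk by (simp add: k_def ca_def a_def B_def bmin_def)
  have eps1': "\<epsilon> < 1 / (ca + 1)" using eps1 by (simp add: ca_def a_def B_def bmin_def)
  define x where "x = x_star M b \<epsilon>"
  define s where "s = (\<lambda>l. sqrt (a^2 + 4*(B - b l)*\<epsilon>))"
  have s_ge: "s l \<ge> a" if "l \<in> {1..M}" for l
  proof -
    have "sqrt (a^2) \<le> s l" unfolding s_def using bl_le_B that eps
      by (intro real_sqrt_le_mono) auto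
    then show ?thesis using a_pos by simp
  qed
  have s_le: "s l \<le> a + 2*(B - bmin)*\<epsilon>/a" if "l \<in> {1..M}" for l
  proof -
    have "s l \<le> a + 4*(B - b l)*\<epsilon>/(2*a)" unfolding s_def
      using sqrt_bound[OF a_pos, of "4*(B - b l)*\<epsilon>"] bl_le_B that eps by auto
    also have "\<dots> \<le> a + 4*(B - bmin)*\<epsilon>/(2*a)"
      using bmin_le that eps a_pos by (auto intro!: divide_right_mono mult_right_mono)
    also have "4*(B - bmin)*\<epsilon>/(2*a) = 2*(B - bmin)*\<epsilon>/a" using a_pos by (simp add: field_simps)
    finally show ?thesis by simp
  qed
  have s_sq: "(s l)^2 = a^2 + 4*(B - b l)*\<epsilon>" if "l \<in> {1..M}" for l
    unfolding s_def using bl_le_B that eps by (intro real_sqrt_pow2) auto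
  have c_eq: "c_coef M b \<epsilon> l = 2*a/(a + s l)" if "l \<in> {1..M}" for l
  proof -
    have bl: "b l > 0" using bpos that by auto
    have e: "(b l)^2 * (1 - B)^4 + 4 * (b l)^2 * (1 - B)^2 * (B - b l) * \<epsilon>
           = (b l * a)^2 * (a^2 + 4*(B - b l)*\<epsilon>)" by (simp add: a_def algebra_simps power2_eq_square power4_eq_xxxx)
    have sq: "sqrt ((b l)^2 * (1 - B)^4 + 4 * (b l)^2 * (1 - B)^2 * (B - b l) * \<epsilon>) = b l * a * s l"
      unfolding e s_def real_sqrt_mult using bl a_pos by simp
    have "c_coef M b \<epsilon> l = 2 * b l * a^2 / (b l * a^2 + b l * a * s l)"
      unfolding c_coef_def Let_def B_def[symmetric] sq by (simp add: a_def)
    also have "\<dots> = (b l * a) * (2*a) / ((b l * a) * (a + s l))"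
      by (simp add: algebra_simps power2_eq_square)
    also have "\<dots> = 2*a/(a + s l)" using bl a_pos s_ge[OF that]
      by (intro mult_divide_mult_cancel_left) auto
    finally show ?thesis .
  qed
  have c_pos: "c_coef M b \<epsilon> l > 0" if "l \<in> {1..M}" for l
    using c_eq[OF that] s_ge[OF that] a_pos by simp
  have cmin_in: "Min (c_coef M b \<epsilon> ` {1..M}) \<in> c_coef M b \<epsilon> ` {1..M}"
    using fin ne by (intro Min_in) auto
  then obtain l0 where l0: "l0 \<in> {1..M}" "Min (c_coef M b \<epsilon> ` {1..M}) = c_coef M b \<epsilon> l0" by auto
  have x_eq: "x = 2/(a + s l0)"
    unfolding x_def x_star_def l0(2) c_eq[OF l0(1)] B_def[symmetric] a_def[symmetric]
    using a_pos s_ge[OF l0(1)] by (simp add: divide_divide_eq_left)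
  have x_le: "x \<le> 2/(a + s l)" if "l \<in> {1..M}" for l
  proof -
    have "Min (c_coef M b \<epsilon> ` {1..M}) \<le> c_coef M b \<epsilon> l" using fin that by auto
    then have "Min (c_coef M b \<epsilon> ` {1..M}) / a \<le> c_coef M b \<epsilon> l / a"
      using a_pos by (simp add: divide_right_mono)
    then show ?thesis unfolding x_def x_star_def B_def[symmetric] a_def[symmetric] c_eq[OF that]
      using a_pos s_ge[OF that] by simp
  qed
  have x_pos: "x > 0" using x_eq a_pos s_ge[OF l0(1)] by simp
  have x_le_inv: "x \<le> 1/a"
  proof -
    have "2/(a + s l0) \<le> 2/(a + a)" using a_pos s_ge[OF l0(1)] by (intro divide_left_mono) auto
    then show ?thesis using x_eq a_pos by simp
  qed
  have inv_x: "1/x \<le> a + (B - bmin)*\<epsilon>/a"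
  proof -
    have "1/x = (a + s l0)/2" using x_eq by simp
    also have "\<dots> \<le> (a + (a + 2*(B - bmin)*\<epsilon>/a))/2" using s_le[OF l0(1)] by simp
    also have "\<dots> = a + (B - bmin)*\<epsilon>/a" by (simp add: field_simps)
    finally show ?thesis .
  qed
  have rstar: "r_star M w b \<epsilon> l = b l * x" if "l \<in> {1..M}" for l
  proof -
    have bl1: "b l < 1" using bl_le_B that Bl1 unfolding B_def by fastforce
    have "sqrt (w l) / sqrt (w l) \<le> (\<Sum>i=1..M. sqrt (w l) / sqrt (w i))"
      using wpos that by (intro member_le_sum) (auto simp: less_imp_le)
    moreover have "(\<Sum>i=1..M. sqrt (w l) / sqrt (w i)) = beta_star M w * sqrt (w l)"
      unfolding beta_star_def sum_distrib_right by simp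
    moreover have "sqrt (w l) / sqrt (w l) = 1" using wpos that by (simp add: less_imp_neq[symmetric])
    ultimately have "beta_star M w * sqrt (w l) \<ge> 1" by simp
    then have "min (b l) (beta_star M w * sqrt (w l)) = b l" using bl1 by simp
    then show ?thesis unfolding r_star_def x_def by simp
  qed
  have Sstar: "Ssum M (r_star M w b \<epsilon>) = B * x"
  proof -
    have "Ssum M (r_star M w b \<epsilon>) = (\<Sum>i=1..M. b i * x)"
      unfolding Ssum_def using rstar by (intro sum.cong) auto
    then show ?thesis unfolding B_def sum_distrib_right .
  qed
  have feas: "feasible M b \<epsilon> (r_star M w b \<epsilon>)"
    unfolding feasible_def
  proof
    fix l assume l: "l \<in> {1..M}"
    define bl where "bl = b l"
    have bl: "bl > 0" using bpos l by (simp add: bl_def)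
    have Bbl: "B - bl \<ge> 0" using bl_le_B l by (simp add: bl_def)
    define y where "y = 2/(a + s l)"
    have ys: "y * (a + s l) = 2"
    proof -
      have "a + s l \<noteq> 0" using a_pos s_ge[OF l] by simp
      then show ?thesis unfolding y_def by (metis nonzero_eq_divide_eq)
    qed
    have qy: "(B - bl)*\<epsilon>*y^2 + a*y - 1 = 0"
    proof -
      have "(B - bl)*\<epsilon> = ((s l)^2 - a^2)/4" using s_sq[OF l] by (simp add: bl_def)
      then have "(B - bl)*\<epsilon>*y^2 + a*y - 1 = ((s l)^2 - a^2)/4 * y^2 + a*y - 1" by simp
      also have "\<dots> = ((s l - a) * (y * (a + s l)) * y)/4 + a*y - 1"
        by (simp add: power2_eq_square ring_distribs mult.commute mult.left_commute)
      also have "\<dots> = ((s l - a) * 2 * y)/4 + a*y - 1" unfolding ys by simp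
      also have "\<dots> = (y * (a + s l))/2 - 1" by (simp add: field_simps)
      also have "\<dots> = 0" unfolding ys by simp
      finally show ?thesis .
    qed
    have xy: "x \<le> y" using x_le[OF l] by (simp add: y_def)
    have "x^2 \<le> y^2" using xy x_pos by (intro power_mono) auto
    then have "(B - bl)*\<epsilon>*x^2 \<le> (B - bl)*\<epsilon>*y^2" using Bbl eps by (intro mult_left_mono) auto
    moreover have "a*x \<le> a*y" using xy a_pos by simp
    ultimately have qx: "(B - bl)*\<epsilon>*x^2 + a*x - 1 \<le> 0" using qy by linarith
    define e where "e = exp (-(bl*x)*\<epsilon>)"
    have e_ge: "e \<ge> 1 - bl*x*\<epsilon>" unfolding e_def using exp_ge_add_one_self[of "-(bl*x)*\<epsilon>"] by simp
    have "(B - bl)*x*(1 - bl*x*\<epsilon>) \<le> (B - bl)*x*e"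
      using e_ge Bbl x_pos by (intro mult_left_mono) auto
    then have h1: "(B - bl)*x - (B - bl)*bl*\<epsilon>*x^2 \<le> (B - bl)*x*e"
      by (simp add: algebra_simps power2_eq_square)
    have h2: "bl*((B - bl)*\<epsilon>*x^2 + a*x - 1) \<le> 0" using qx bl by (simp add: mult_nonpos_nonneg mult_le_0_iff)
    have num: "(1 - e)*(B*x) + bl*x*e \<le> bl*(B*x + 1)"
    proof -
      have "(1 - e)*(B*x) + bl*x*e = B*x - (B - bl)*x*e" by (simp add: algebra_simps)
      also have "\<dots> \<le> B*x - (B - bl)*x + (B - bl)*bl*\<epsilon>*x^2" using h1 by linarith
      also have "\<dots> \<le> bl*(B*x + 1)" using h2 unfolding a_def by (simp add: algebra_simps)
      finally show ?thesis .
    qed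
    have Bx: "B*x + 1 > 0" using bl_le_B l bl x_pos by (smt (verit) bl_def mult_pos_pos)
    show "0 < r_star M w b \<epsilon> l \<and> sigma M \<epsilon> (r_star M w b \<epsilon>) l \<le> b l"
    proof
      show "0 < r_star M w b \<epsilon> l" using rstar[OF l] bl x_pos by (simp add: bl_def)
      show "sigma M \<epsilon> (r_star M w b \<epsilon>) l \<le> b l"
        unfolding sigma_def Sstar rstar[OF l] bl_def[symmetric] e_def[symmetric]
        using num Bx by (simp add: pos_divide_le_eq e_def)
    qed
  qed
  have lower: "L \<le> Delta_bar M w \<epsilon> r" if fr: "feasible M b \<epsilon> r" for r
  proof -
    define S where "S = Ssum M r"
    have tm: "w l / b l \<le> w l * exp (- r l * \<epsilon>) / r l * exp (\<epsilon> * S) * (1 + S)"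
      if l: "l \<in> {1..M}" for l
    proof -
      have rpos: "\<forall>i\<in>{1..M}. r i > 0" using fr unfolding feasible_def by auto
      have rl: "r l > 0" using rpos l by auto
      have sig: "sigma M \<epsilon> r l \<le> b l" using fr l unfolding feasible_def by auto
      have rS: "r l \<le> S" unfolding S_def Ssum_def using rpos l
        by (intro member_le_sum) (auto simp: less_imp_le)
      have Spos: "S + 1 > 0" using rS rl by simp
      have e1: "exp (- r l * \<epsilon>) \<le> 1" using rl eps by simp
      have "(1 - exp (- r l * \<epsilon>)) * (S - r l) \<ge> 0" using e1 rS by simp
      then have "r l \<le> (1 - exp (- r l * \<epsilon>)) * S + r l * exp (- r l * \<epsilon>)"
        by (simp add: algebra_simps)
      then have "r l / (S + 1) \<le> sigma M \<epsilon> r l"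
        unfolding sigma_def S_def[symmetric] using Spos by (intro divide_right_mono) auto
      then have "r l / (S + 1) \<le> b l" using sig by simp
      then have rb: "r l \<le> b l * (1 + S)" using Spos by (simp add: pos_divide_le_eq algebra_simps)
      have bl: "b l > 0" using bpos l by auto
      have q: "1 / b l \<le> (1 + S) / r l" using rb bl rl by (simp add: field_simps)
      have E: "1 \<le> exp (\<epsilon> * (S - r l))" using rS eps by simp
      have "w l / b l = w l * (1 * (1 / b l))" by simp
      also have "\<dots> \<le> w l * (exp (\<epsilon> * (S - r l)) * ((1 + S) / r l))"
        using E q wpos l bl by (intro mult_left_mono mult_mono) (auto simp: less_imp_le)
      also have "\<dots> = w l * exp (- r l * \<epsilon>) / r l * exp (\<epsilon> * S) * (1 + S)"
        by (simp add: exp_diff exp_minus algebra_simps field_simps)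
      finally show ?thesis .
    qed
    have "(\<Sum>l=1..M. w l / b l) \<le> (\<Sum>l=1..M. w l * exp (- r l * \<epsilon>) / r l * exp (\<epsilon> * S) * (1 + S))"
      using tm by (intro sum_mono) auto
    then show ?thesis unfolding L_def Delta_bar_def S_def by simp
  qed
  define u where "u = ca * \<epsilon>"
  have u_nn: "u \<ge> 0" using ca_nn eps by (simp add: u_def)
  have u_le1: "u \<le> 1"
  proof -
    have "\<epsilon> * (ca + 1) < 1" using eps1' ca_nn by (simp add: field_simps)
    then show ?thesis using eps by (simp add: u_def algebra_simps)
  qed
  have u2: "3 * u^2 \<le> \<epsilon> * k"
  proof -
    have "\<epsilon> * (3*ca^2 + 1) < k" using epsk' ca_nn by (simp add: field_simps add_pos_nonneg)
    then have "\<epsilon> * (3*ca^2) \<le> k" using eps by (simp add: algebra_simps)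
    then have "\<epsilon> * (\<epsilon> * (3*ca^2)) \<le> \<epsilon> * k" using eps by (intro mult_left_mono) auto
    then show ?thesis by (simp add: u_def power2_eq_square algebra_simps)
  qed
  have upper_term: "w l * exp (- r_star M w b \<epsilon> l * \<epsilon>) / r_star M w b \<epsilon> l
        * exp (\<epsilon> * Ssum M (r_star M w b \<epsilon>)) * (1 + Ssum M (r_star M w b \<epsilon>))
      \<le> w l / b l + \<epsilon> * (w l / (b l * a) * (3*B - bmin))" if l: "l \<in> {1..M}" for l
  proof -
    have bl: "b l > 0" using bpos l by auto
    have wl: "w l > 0" using wpos l by auto
    have ex: "x * (B - b l) * \<epsilon> \<le> u"
    proof -
      have "x * (B - b l) \<le> (1/a) * (B - bmin)"
        using x_le_inv x_pos bl_le_B bmin_le l a_pos by (intro mult_mono) auto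
      then have "x * (B - b l) * \<epsilon> \<le> (1/a) * (B - bmin) * \<epsilon>" using eps by (intro mult_right_mono) auto
      then show ?thesis by (simp add: u_def ca_def)
    qed
    have fx: "(1 + B*x)/x \<le> 1 + u"
    proof -
      have "(1 + B*x)/x = 1/x + B" using x_pos by (simp add: field_simps)
      also have "\<dots> \<le> a + (B - bmin)*\<epsilon>/a + B" using inv_x by simp
      also have "\<dots> = 1 + u" by (simp add: u_def ca_def a_def)
      finally show ?thesis .
    qed
    have "w l * exp (- r_star M w b \<epsilon> l * \<epsilon>) / r_star M w b \<epsilon> l
        * exp (\<epsilon> * Ssum M (r_star M w b \<epsilon>)) * (1 + Ssum M (r_star M w b \<epsilon>))
        = (w l / b l) * (exp (x * (B - b l) * \<epsilon>) * ((1 + B*x)/x))"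
      unfolding rstar[OF l] Sstar using bl x_pos
      by (simp add: exp_minus exp_diff[symmetric] field_simps exp_add[symmetric])
    also have "\<dots> \<le> (w l / b l) * (exp u * (1 + u))"
      using ex fx x_pos wl bl u_nn bmin_le_B bmin_pos
      by (intro mult_left_mono mult_mono) (auto simp: less_imp_le)
    also have "\<dots> \<le> (w l / b l) * (1 + 2*u + 3*u^2)"
      using exp_cubic[OF u_nn u_le1] wl bl by (intro mult_left_mono) auto
    also have "\<dots> \<le> (w l / b l) * (1 + 2*u + \<epsilon> * k)"
      using u2 wl bl by (intro mult_left_mono) auto
    also have "\<dots> = w l / b l + \<epsilon> * (w l / (b l * a) * (3*B - bmin))"
      using a_pos bl by (simp add: u_def ca_def k_def field_simps)
    finally show ?thesis .
  qed
  have C2_eq: "C2 M w b = (\<Sum>l=1..M. w l / (b l * a) * (3*B - bmin))"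
    unfolding C2_def B_def a_def bmin_def ..
  have upper: "Delta_bar M w \<epsilon> (r_star M w b \<epsilon>) \<le> L + \<epsilon> * C2 M w b"
  proof -
    have "(\<Sum>l=1..M. w l * exp (- r_star M w b \<epsilon> l * \<epsilon>) / r_star M w b \<epsilon> l
        * exp (\<epsilon> * Ssum M (r_star M w b \<epsilon>)) * (1 + Ssum M (r_star M w b \<epsilon>)))
      \<le> (\<Sum>l=1..M. w l / b l + \<epsilon> * (w l / (b l * a) * (3*B - bmin)))"
      using upper_term by (intro sum_mono) auto
    then show ?thesis unfolding Delta_bar_def L_def C2_eq sum.distrib sum_distrib_left by simp
  qed
  have bdd: "bdd_below (Delta_bar M w \<epsilon> ` {r. feasible M b \<epsilon> r})"
    using lower by (intro bdd_belowI[of _ L]) auto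
  have opt_le: "Delta_opt M w b \<epsilon> \<le> Delta_bar M w \<epsilon> (r_star M w b \<epsilon>)"
    unfolding Delta_opt_def using feas bdd by (intro cInf_lower) auto
  have opt_ge: "L \<le> Delta_opt M w b \<epsilon>"
    unfolding Delta_opt_def using feas lower by (intro cINF_greatest) auto
  show ?thesis using opt_le opt_ge upper by simp
qed

theorem theorem2:
  fixes M :: nat and w b :: "nat \<Rightarrow> real"
  assumes "M \<ge> 1"
    and "\<forall>i\<in>{1..M}. w i > 0"
    and "\<forall>i\<in>{1..M}. b i > 0"
    and "(\<Sum>i=1..M. b i) < 1"
  shows "\<exists>g :: real \<Rightarrow> real. g \<in> o[at_right 0](\<lambda>\<epsilon>. \<epsilon>) \<and>
           (\<forall>\<^sub>F \<epsilon> in at_right 0.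
              \<bar>Delta_bar M w \<epsilon> (r_star M w b \<epsilon>) - Delta_opt M w b \<epsilon>\<bar> \<le> \<epsilon> * C2 M w b + g \<epsilon>)"
proof -
  define B where "B = (\<Sum>i=1..M. b i)"
  define bmin where "bmin = Min (b ` {1..M})"
  define a where "a = 1 - B"
  define k where "k = (B + bmin)/a"
  define ca where "ca = (B - bmin)/a"
  have fin: "finite {1..M}" by simp
  have ne: "{1..M} \<noteq> {}" using assms(1) by simp
  have a_pos: "a > 0" using assms(4) by (simp add: a_def B_def)
  have bmin_in: "bmin \<in> b ` {1..M}" unfolding bmin_def using fin ne by (intro Min_in) auto
  have bmin_pos: "bmin > 0" using bmin_in assms(3) by auto
  have bl_le_B: "\<forall>l\<in>{1..M}. b l \<le> B" unfolding B_def
    using assms(3) by (auto intro!: member_le_sum simp: less_imp_le)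
  have bmin_le_B: "bmin \<le> B" using bmin_in bl_le_B by auto
  have k_pos: "k > 0" using a_pos bmin_pos bmin_le_B by (simp add: k_def)
  have ca_nn: "ca \<ge> 0" using a_pos bmin_le_B by (simp add: ca_def)
  define \<delta> where "\<delta> = min (k / (3*ca^2 + 1)) (1 / (ca + 1))"
  have "3*ca^2 + 1 > 0" by (simp add: add_nonneg_pos)
  then have \<delta>_pos: "\<delta> > 0" using k_pos ca_nn by (simp add: \<delta>_def)
  have ev: "\<forall>\<^sub>F \<epsilon> in at_right 0.
     \<bar>Delta_bar M w \<epsilon> (r_star M w b \<epsilon>) - Delta_opt M w b \<epsilon>\<bar> \<le> \<epsilon> * C2 M w b + 0"
    unfolding eventually_at_right_field
  proof (intro exI[of _ \<delta>] conjI allI impI)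
    show "(0::real) < \<delta>" by (rule \<delta>_pos)
    fix \<epsilon> :: real assume e: "0 < \<epsilon>" "\<epsilon> < \<delta>"
    have "\<bar>Delta_bar M w \<epsilon> (r_star M w b \<epsilon>) - Delta_opt M w b \<epsilon>\<bar> \<le> \<epsilon> * C2 M w b"
      apply (rule eps_bound[OF assms e(1)])
      using e(2) unfolding \<delta>_def k_def ca_def a_def B_def bmin_def by auto
    then show "\<bar>Delta_bar M w \<epsilon> (r_star M w b \<epsilon>) - Delta_opt M w b \<epsilon>\<bar> \<le> \<epsilon> * C2 M w b + 0" by simp
  qed
  show ?thesis
    by (rule exI[of _ "\<lambda>_. 0"]) (use ev in simp)
qed

end
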